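(* Let $M$ be an $H_v$-module over an $H_v$-ring $R$, $T$ an idempotent interval $t$-norm and $S$ an idempotent interval $s$-norm. If $A=(\widetilde{M}_A,\widetilde{N}_A)$ is an interval valued intuitionistic $(S,T)$-fuzzy $H_v$-submodule of $M$, then $A/\varepsilon^*=(\widetilde{M}_{\varepsilon^*},\widetilde{N}_{\varepsilon^*})$ is an interval valued intuitionistic $(S,T)$-fuzzy submodule of the fundamental module $M/\varepsilon^*$ (over the fundamental ring $R/\gamma^*$).
   Context: For a set $H$, $P^*(H)$ denotes the non-empty subsets of $H$; a hyperoperation is a map $H\times H\to P^*(H)$, and for $A,B\subseteq H$, $A\cdot B=\bigcup_{a\in A,b\in B}a\cdot b$. An $H_v$-semigroup is $(H,\cdot)$ with $(x\cdot(y\cdot z))\cap((x\cdot y)\cdot z)\neq\emptyset$ for all $x,y,z$; an $H_v$-group is an $H_v$-semigroup with $a\cdot H=H\cdot a=H$ for all $a\in H$; it is weak commutative if $x\cdot y\cap y\cdot x\ne\emptyset$ for all $x,y$. An $H_v$-ring is $(R,+,\cdot)$ with $(R,+)$ an $H_v$-group, $(R,\cdot)$ an $H_v$-semigroup, and $(x\cdot(y+z))\cap(x\cdot y+x\cdot z)\ne\emptyset$, $((x+y)\cdot z)\cap(x\cdot z+y\cdot z)\ne\emptyset$ for all $x,y,z$. An $H_v$-module over an $H_v$-ring $R$ is a non-empty set $M$ with $(M,+)$ a weak commutative $H_v$-group and a map $\cdot:R\times M\to P^*(M)$ such that for all $a,b\in R$, $x,y\in M$: $(a\cdot(x+y))\cap(a\cdot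 x+a\cdot y)\ne\emptyset$, $((a+b)\cdot x)\cap(a\cdot x+b\cdot x)\ne\emptyset$, $((a\cdot b)\cdot x)\cap(a\cdot(b\cdot x))\ne\emptyset$. Fundamental relations: $\gamma^*$ is the smallest equivalence relation on $R$ such that $R/\gamma^*$ is a ring, and $\varepsilon^*$ is the smallest equivalence relation on $M$ such that $M/\varepsilon^*$ is a module over $R/\gamma^*$, with operations $\varepsilon^*(x)\oplus\varepsilon^*(y)=\varepsilon^*(c)$ for any $c\in\varepsilon^*(x)+\varepsilon^*(y)$ and $\gamma^*(r)\odot\varepsilon^*(x)=\varepsilon^*(d)$ for any $d\in\gamma^*(r)\cdot\varepsilon^*(x)$ (equivalently, $\varepsilon^*$ is the transitive closure of the relation $x\,\varepsilon\,y\iff\{x,y\}\subseteq u$ for some finite expression $u$ built from the hyperoperations of $R$ and $M$ and the external hyperoperation). $\omega_M$ denotes the zero element of $(M/\varepsilon^*,\oplus)$ (the core of $M$). $D[0,1]$ is the set of intervals $[a^-,a^+]$ with $0\le a^-\le a^+\le 1$, ordered componentwise; infima and suprema of families are taken componentwise. A map $\delta:[0,1]^2\to[0,1]$ that is commutative, associative, idempotent and monotone is an idempotent $t$-norm if $\delta(x,1)=x$ for all $x$, and an idempotent $s$-norm if $\delta(1,1)=1$ and $\delta(x,0)=x$ for all $x$. An idempotent interval $t$-norm (resp. $s$-norm) is a map $D[0,1]^2\to D[0,1]$, $([a_1^-,a_1^+],[a_2^-,a_2^+])\mapsto[\delta(a_1^-,a_2^-),\delta(a_1^+,a_2^+)]$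 with $\delta$ an idempotent $t$-norm (resp. $s$-norm). An interval valued intuitionistic fuzzy set on $X$ is a pair $A=(\widetilde{M}_A,\widetilde{N}_A)$ of maps $X\to D[0,1]$ with $\sup\widetilde{M}_A(x)+\sup\widetilde{N}_A(x)\le1$ for all $x$. $A=(\widetilde{M}_A,\widetilde{N}_A)$ on $M$ is an interval valued intuitionistic $(S,T)$-fuzzy $H_v$-submodule if: (1) $T(\widetilde{M}_A(x),\widetilde{M}_A(y))\le\inf_{\alpha\in x+y}\widetilde{M}_A(\alpha)$ and $S(\widetilde{N}_A(x),\widetilde{N}_A(y))\ge\sup_{\alpha\in x+y}\widetilde{N}_A(\alpha)$ for all $x,y$; (2) for all $x,a\in M$ there is $y$ with $x\in a+y$, $T(\widetilde{M}_A(x),\widetilde{M}_A(a))\le\widetilde{M}_A(y)$, $S(\widetilde{N}_A(x),\widetilde{N}_A(a))\ge\widetilde{N}_A(y)$; (3) for all $x,a\in M$ there is $z$ with $x\in z+a$, $T(\widetilde{M}_A(x),\widetilde{M}_A(a))\le\widetilde{M}_A(z)$, $S(\widetilde{N}_A(x),\widetilde{N}_A(a))\ge\widetilde{N}_A(z)$; (4) $\widetilde{M}_A(x)\le\inf_{\alpha\in r\cdot x}\widetilde{M}_A(\alpha)$ and $\widetilde{N}_A(x)\ge\sup_{\alpha\in r\cdot x}\widetilde{N}_A(\alpha)$ for all $x\in M$, $r\in R$. $A/\varepsilon^*=(\widetilde{M}_{\varepsilon^*},\widetilde{N}_{\varepsilon^*})$ with $\widetilde{M}_{\varepsilon^*},\widetilde{N}_{\varepsilon^*}:M/\varepsilon^*\to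 D[0,1]$ defined by $\widetilde{M}_{\varepsilon^*}(\varepsilon^*(x))=\sup_{a\in\varepsilon^*(x)}\widetilde{M}_A(a)$ and $\widetilde{N}_{\varepsilon^*}(\varepsilon^*(x))=\inf_{a\in\varepsilon^*(x)}\widetilde{N}_A(a)$ if $\varepsilon^*(x)\ne\omega_M$, and $\widetilde{M}_{\varepsilon^*}(\omega_M)=[1,1]$, $\widetilde{N}_{\varepsilon^*}(\omega_M)=[0,0]$. For an ordinary module $M'$ over a ring $R'$, an interval valued intuitionistic fuzzy set $A'=(\widetilde{M}_{A'},\widetilde{N}_{A'})$ on $M'$ is an interval valued intuitionistic $(S,T)$-fuzzy submodule if: (i) $\widetilde{M}_{A'}(0)=[1,1]$ and $\widetilde{N}_{A'}(0)=[0,0]$; (ii) $T(\widetilde{M}_{A'}(x),\widetilde{M}_{A'}(y))\le\widetilde{M}_{A'}(x-y)$ and $S(\widetilde{N}_{A'}(x),\widetilde{N}_{A'}(y))\ge\widetilde{N}_{A'}(x-y)$ for all $x,y\in M'$; (iii) $\widetilde{M}_{A'}(x)\le\widetilde{M}_{A'}(r x)$ and $\widetilde{N}_{A'}(x)\ge\widetilde{N}_{A'}(r x)$ for all $x\in M'$, $r\in R'$. *)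

theory Defs
  imports Complex_Main
begin

section \<open>Hyperoperations and H_v-structures (carrier = the whole type)\<close>

definition setop :: "('a \<Rightarrow> 'b \<Rightarrow> 'c set) \<Rightarrow> 'a set \<Rightarrow> 'b set \<Rightarrow> 'c set" where
  "setop f A B = (\<Union>a\<in>A. \<Union>b\<in>B. f a b)"

definition hyperop :: "('a \<Rightarrow> 'b \<Rightarrow> 'c set) \<Rightarrow> bool" where
  "hyperop f \<longleftrightarrow> (\<forall>x y. f x y \<noteq> {})"

definition hv_semigroup :: "('a \<Rightarrow> 'a \<Rightarrow> 'a set) \<Rightarrow> bool" where
  "hv_semigroup f \<longleftrightarrow> hyperop f \<and>
     (\<forall>x y z. setop f {x} (f y z) \<inter> setop f (f x y) {z} \<noteq> {})"

definition hv_group :: "('a \<Rightarrow> 'a \<Rightarrow> 'a set) \<Rightarrow> bool" where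
  "hv_group f \<longleftrightarrow> hv_semigroup f \<and>
     (\<forall>a. setop f {a} UNIV = UNIV \<and> setop f UNIV {a} = UNIV)"

definition weak_comm :: "('a \<Rightarrow> 'a \<Rightarrow> 'a set) \<Rightarrow> bool" where
  "weak_comm f \<longleftrightarrow> (\<forall>x y. f x y \<inter> f y x \<noteq> {})"

definition hv_ring :: "('r \<Rightarrow> 'r \<Rightarrow> 'r set) \<Rightarrow> ('r \<Rightarrow> 'r \<Rightarrow> 'r set) \<Rightarrow> bool" where
  "hv_ring add mul \<longleftrightarrow> hv_group add \<and> hv_semigroup mul \<and>
     (\<forall>x y z. setop mul {x} (add y z) \<inter> setop add (mul x y) (mul x z) \<noteq> {}) \<and>
     (\<forall>x y z. setop mul (add x y) {z} \<inter> setop add (mul x z) (mul y z) \<noteq> {})"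

definition hv_module ::
  "('r \<Rightarrow> 'r \<Rightarrow> 'r set) \<Rightarrow> ('r \<Rightarrow> 'r \<Rightarrow> 'r set) \<Rightarrow>
   ('m \<Rightarrow> 'm \<Rightarrow> 'm set) \<Rightarrow> ('r \<Rightarrow> 'm \<Rightarrow> 'm set) \<Rightarrow> bool" where
  "hv_module addR mulR addM smul \<longleftrightarrow>
     hv_ring addR mulR \<and> hv_group addM \<and> weak_comm addM \<and> hyperop smul \<and>
     (\<forall>a x y. setop smul {a} (addM x y) \<inter> setop addM (smul a x) (smul a y) \<noteq> {}) \<and>
     (\<forall>a b x. setop smul (addR a b) {x} \<inter> setop addM (smul a x) (smul b x) \<noteq> {}) \<and>
     (\<forall>a b x. setop smul (mulR a b) {x} \<inter> setop smul {a} (smul b x) \<noteq> {})"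

text \<open>Values of finite expressions built from the hyperoperations of R.\<close>
inductive_set rexp :: "('r \<Rightarrow> 'r \<Rightarrow> 'r set) \<Rightarrow> ('r \<Rightarrow> 'r \<Rightarrow> 'r set) \<Rightarrow> 'r set set"
  for addR mulR where
  rexp_single: "{r} \<in> rexp addR mulR"
| rexp_add: "A \<in> rexp addR mulR \<Longrightarrow> B \<in> rexp addR mulR \<Longrightarrow> setop addR A B \<in> rexp addR mulR"
| rexp_mul: "A \<in> rexp addR mulR \<Longrightarrow> B \<in> rexp addR mulR \<Longrightarrow> setop mulR A B \<in> rexp addR mulR"

text \<open>Values of finite M-valued expressions built from the hyperoperations of R, M
  and the external hyperoperation.\<close>
inductive_set mexp ::
  "('r \<Rightarrow> 'r \<Rightarrow> 'r set) \<Rightarrow> ('r \<Rightarrow> 'r \<Rightarrow> 'r set) \<Rightarrow>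
   ('m \<Rightarrow> 'm \<Rightarrow> 'm set) \<Rightarrow> ('r \<Rightarrow> 'm \<Rightarrow> 'm set) \<Rightarrow> 'm set set"
  for addR mulR addM smul where
  mexp_single: "{x} \<in> mexp addR mulR addM smul"
| mexp_add: "A \<in> mexp addR mulR addM smul \<Longrightarrow> B \<in> mexp addR mulR addM smul \<Longrightarrow>
     setop addM A B \<in> mexp addR mulR addM smul"
| mexp_smul: "A \<in> rexp addR mulR \<Longrightarrow> B \<in> mexp addR mulR addM smul \<Longrightarrow>
     setop smul A B \<in> mexp addR mulR addM smul"

definition gamma_rel :: "('r \<Rightarrow> 'r \<Rightarrow> 'r set) \<Rightarrow> ('r \<Rightarrow> 'r \<Rightarrow> 'r set) \<Rightarrow> 'r \<Rightarrow> 'r \<Rightarrow> bool" where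
  "gamma_rel addR mulR x y \<longleftrightarrow> (\<exists>u\<in>rexp addR mulR. x \<in> u \<and> y \<in> u)"

definition gamma_star :: "('r \<Rightarrow> 'r \<Rightarrow> 'r set) \<Rightarrow> ('r \<Rightarrow> 'r \<Rightarrow> 'r set) \<Rightarrow> 'r \<Rightarrow> 'r \<Rightarrow> bool" where
  "gamma_star addR mulR = (gamma_rel addR mulR)\<^sup>*\<^sup>*"

definition eps_rel ::
  "('r \<Rightarrow> 'r \<Rightarrow> 'r set) \<Rightarrow> ('r \<Rightarrow> 'r \<Rightarrow> 'r set) \<Rightarrow>
   ('m \<Rightarrow> 'm \<Rightarrow> 'm set) \<Rightarrow> ('r \<Rightarrow> 'm \<Rightarrow> 'm set) \<Rightarrow> 'm \<Rightarrow> 'm \<Rightarrow> bool" where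
  "eps_rel addR mulR addM smul x y \<longleftrightarrow> (\<exists>u\<in>mexp addR mulR addM smul. x \<in> u \<and> y \<in> u)"

definition eps_star ::
  "('r \<Rightarrow> 'r \<Rightarrow> 'r set) \<Rightarrow> ('r \<Rightarrow> 'r \<Rightarrow> 'r set) \<Rightarrow>
   ('m \<Rightarrow> 'm \<Rightarrow> 'm set) \<Rightarrow> ('r \<Rightarrow> 'm \<Rightarrow> 'm set) \<Rightarrow> 'm \<Rightarrow> 'm \<Rightarrow> bool" where
  "eps_star addR mulR addM smul = (eps_rel addR mulR addM smul)\<^sup>*\<^sup>*"

definition gamma_class :: "('r \<Rightarrow> 'r \<Rightarrow> 'r set) \<Rightarrow> ('r \<Rightarrow> 'r \<Rightarrow> 'r set) \<Rightarrow> 'r \<Rightarrow> 'r set" where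
  "gamma_class addR mulR r = {s. gamma_star addR mulR r s}"

definition fund_ring :: "('r \<Rightarrow> 'r \<Rightarrow> 'r set) \<Rightarrow> ('r \<Rightarrow> 'r \<Rightarrow> 'r set) \<Rightarrow> 'r set set" where
  "fund_ring addR mulR = range (gamma_class addR mulR)"

definition eps_class ::
  "('r \<Rightarrow> 'r \<Rightarrow> 'r set) \<Rightarrow> ('r \<Rightarrow> 'r \<Rightarrow> 'r set) \<Rightarrow>
   ('m \<Rightarrow> 'm \<Rightarrow> 'm set) \<Rightarrow> ('r \<Rightarrow> 'm \<Rightarrow> 'm set) \<Rightarrow> 'm \<Rightarrow> 'm set" where
  "eps_class addR mulR addM smul x = {y. eps_star addR mulR addM smul x y}"

definition fund_module ::
  "('r \<Rightarrow> 'r \<Rightarrow> 'r set) \<Rightarrow> ('r \<Rightarrow> 'r \<Rightarrow> 'r set) \<Rightarrow>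
   ('m \<Rightarrow> 'm \<Rightarrow> 'm set) \<Rightarrow> ('r \<Rightarrow> 'm \<Rightarrow> 'm set) \<Rightarrow> 'm set set" where
  "fund_module addR mulR addM smul = range (eps_class addR mulR addM smul)"

definition fadd ::
  "('r \<Rightarrow> 'r \<Rightarrow> 'r set) \<Rightarrow> ('r \<Rightarrow> 'r \<Rightarrow> 'r set) \<Rightarrow>
   ('m \<Rightarrow> 'm \<Rightarrow> 'm set) \<Rightarrow> ('r \<Rightarrow> 'm \<Rightarrow> 'm set) \<Rightarrow> 'm set \<Rightarrow> 'm set \<Rightarrow> 'm set" where
  "fadd addR mulR addM smul X Y =
     eps_class addR mulR addM smul (SOME c. c \<in> setop addM X Y)"

definition fsmul ::
  "('r \<Rightarrow> 'r \<Rightarrow> 'r set) \<Rightarrow> ('r \<Rightarrow> 'r \<Rightarrow> 'r set) \<Rightarrow>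
   ('m \<Rightarrow> 'm \<Rightarrow> 'm set) \<Rightarrow> ('r \<Rightarrow> 'm \<Rightarrow> 'm set) \<Rightarrow> 'r set \<Rightarrow> 'm set \<Rightarrow> 'm set" where
  "fsmul addR mulR addM smul P X =
     eps_class addR mulR addM smul (SOME d. d \<in> setop smul P X)"

definition omega ::
  "('r \<Rightarrow> 'r \<Rightarrow> 'r set) \<Rightarrow> ('r \<Rightarrow> 'r \<Rightarrow> 'r set) \<Rightarrow>
   ('m \<Rightarrow> 'm \<Rightarrow> 'm set) \<Rightarrow> ('r \<Rightarrow> 'm \<Rightarrow> 'm set) \<Rightarrow> 'm set" where
  "omega addR mulR addM smul =
     (THE W. W \<in> fund_module addR mulR addM smul \<and>
        (\<forall>X\<in>fund_module addR mulR addM smul.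
           fadd addR mulR addM smul W X = X \<and> fadd addR mulR addM smul X W = X))"

definition fneg ::
  "('r \<Rightarrow> 'r \<Rightarrow> 'r set) \<Rightarrow> ('r \<Rightarrow> 'r \<Rightarrow> 'r set) \<Rightarrow>
   ('m \<Rightarrow> 'm \<Rightarrow> 'm set) \<Rightarrow> ('r \<Rightarrow> 'm \<Rightarrow> 'm set) \<Rightarrow> 'm set \<Rightarrow> 'm set" where
  "fneg addR mulR addM smul X =
     (THE Y. Y \<in> fund_module addR mulR addM smul \<and>
        fadd addR mulR addM smul X Y = omega addR mulR addM smul)"

definition fsub ::
  "('r \<Rightarrow> 'r \<Rightarrow> 'r set) \<Rightarrow> ('r \<Rightarrow> 'r \<Rightarrow> 'r set) \<Rightarrow>
   ('m \<Rightarrow> 'm \<Rightarrow> 'm set) \<Rightarrow> ('r \<Rightarrow> 'm \<Rightarrow> 'm set) \<Rightarrow> 'm set \<Rightarrow> 'm set \<Rightarrow> 'm set" where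
  "fsub addR mulR addM smul X Y =
     fadd addR mulR addM smul X (fneg addR mulR addM smul Y)"

text \<open>An interval [a^-,a^+] is represented by the pair (a^-, a^+).\<close>
definition interval01 :: "real \<times> real \<Rightarrow> bool" where
  "interval01 a \<longleftrightarrow> 0 \<le> fst a \<and> fst a \<le> snd a \<and> snd a \<le> 1"

definition ivle :: "real \<times> real \<Rightarrow> real \<times> real \<Rightarrow> bool" where
  "ivle a b \<longleftrightarrow> fst a \<le> fst b \<and> snd a \<le> snd b"

definition ivInf :: "(real \<times> real) set \<Rightarrow> real \<times> real" where
  "ivInf S = (Inf (fst ` S), Inf (snd ` S))"

definition ivSup :: "(real \<times> real) set \<Rightarrow> real \<times> real" where
  "ivSup S = (Sup (fst ` S), Sup (snd ` S))"

definition norm_basic :: "(real \<Rightarrow> real \<Rightarrow> real) \<Rightarrow> bool" where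
  "norm_basic d \<longleftrightarrow>
     (\<forall>x\<in>{0..1}. \<forall>y\<in>{0..1}. d x y \<in> {0..1}) \<and>
     (\<forall>x\<in>{0..1}. \<forall>y\<in>{0..1}. d x y = d y x) \<and>
     (\<forall>x\<in>{0..1}. \<forall>y\<in>{0..1}. \<forall>z\<in>{0..1}. d x (d y z) = d (d x y) z) \<and>
     (\<forall>x\<in>{0..1}. d x x = x) \<and>
     (\<forall>x\<in>{0..1}. \<forall>y\<in>{0..1}. \<forall>x'\<in>{0..1}. \<forall>y'\<in>{0..1}.
        x \<le> x' \<longrightarrow> y \<le> y' \<longrightarrow> d x y \<le> d x' y')"

definition idem_tnorm :: "(real \<Rightarrow> real \<Rightarrow> real) \<Rightarrow> bool" where
  "idem_tnorm d \<longleftrightarrow> norm_basic d \<and> (\<forall>x\<in>{0..1}. d x 1 = x)"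

definition idem_snorm :: "(real \<Rightarrow> real \<Rightarrow> real) \<Rightarrow> bool" where
  "idem_snorm d \<longleftrightarrow> norm_basic d \<and> d 1 1 = 1 \<and> (\<forall>x\<in>{0..1}. d x 0 = x)"

definition ivnorm :: "(real \<Rightarrow> real \<Rightarrow> real) \<Rightarrow> real \<times> real \<Rightarrow> real \<times> real \<Rightarrow> real \<times> real" where
  "ivnorm d a b = (d (fst a) (fst b), d (snd a) (snd b))"

definition ivifs :: "'a set \<Rightarrow> ('a \<Rightarrow> real \<times> real) \<Rightarrow> ('a \<Rightarrow> real \<times> real) \<Rightarrow> bool" where
  "ivifs X MA NA \<longleftrightarrow>
     (\<forall>x\<in>X. interval01 (MA x) \<and> interval01 (NA x) \<and> snd (MA x) + snd (NA x) \<le> 1)"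

definition ivi_fuzzy_hv_submodule ::
  "(real \<Rightarrow> real \<Rightarrow> real) \<Rightarrow> (real \<Rightarrow> real \<Rightarrow> real) \<Rightarrow>
   ('m \<Rightarrow> 'm \<Rightarrow> 'm set) \<Rightarrow> ('r \<Rightarrow> 'm \<Rightarrow> 'm set) \<Rightarrow>
   ('m \<Rightarrow> real \<times> real) \<Rightarrow> ('m \<Rightarrow> real \<times> real) \<Rightarrow> bool" where
  "ivi_fuzzy_hv_submodule s t addM smul MA NA \<longleftrightarrow>
     ivifs UNIV MA NA \<and>
     (\<forall>x y. ivle (ivnorm t (MA x) (MA y)) (ivInf (MA ` addM x y)) \<and>
            ivle (ivSup (NA ` addM x y)) (ivnorm s (NA x) (NA y))) \<and>
     (\<forall>x a. \<exists>y. x \<in> addM a y \<and> ivle (ivnorm t (MA x) (MA a)) (MA y) \<and>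
            ivle (NA y) (ivnorm s (NA x) (NA a))) \<and>
     (\<forall>x a. \<exists>z. x \<in> addM z a \<and> ivle (ivnorm t (MA x) (MA a)) (MA z) \<and>
            ivle (NA z) (ivnorm s (NA x) (NA a))) \<and>
     (\<forall>x r. ivle (MA x) (ivInf (MA ` smul r x)) \<and> ivle (ivSup (NA ` smul r x)) (NA x))"

section \<open>The fuzzy set A/eps* on M/eps*\<close>

definition quot_M ::
  "('r \<Rightarrow> 'r \<Rightarrow> 'r set) \<Rightarrow> ('r \<Rightarrow> 'r \<Rightarrow> 'r set) \<Rightarrow>
   ('m \<Rightarrow> 'm \<Rightarrow> 'm set) \<Rightarrow> ('r \<Rightarrow> 'm \<Rightarrow> 'm set) \<Rightarrow> ('m \<Rightarrow> real \<times> real) \<Rightarrow> 'm set \<Rightarrow> real \<times> real" where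
  "quot_M addR mulR addM smul MA X =
     (if X = omega addR mulR addM smul then (1, 1) else ivSup (MA ` X))"

definition quot_N ::
  "('r \<Rightarrow> 'r \<Rightarrow> 'r set) \<Rightarrow> ('r \<Rightarrow> 'r \<Rightarrow> 'r set) \<Rightarrow>
   ('m \<Rightarrow> 'm \<Rightarrow> 'm set) \<Rightarrow> ('r \<Rightarrow> 'm \<Rightarrow> 'm set) \<Rightarrow> ('m \<Rightarrow> real \<times> real) \<Rightarrow> 'm set \<Rightarrow> real \<times> real" where
  "quot_N addR mulR addM smul NA X =
     (if X = omega addR mulR addM smul then (0, 0) else ivInf (NA ` X))"

definition ivi_fuzzy_fund_submodule ::
  "(real \<Rightarrow> real \<Rightarrow> real) \<Rightarrow> (real \<Rightarrow> real \<Rightarrow> real) \<Rightarrow>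
   ('r \<Rightarrow> 'r \<Rightarrow> 'r set) \<Rightarrow> ('r \<Rightarrow> 'r \<Rightarrow> 'r set) \<Rightarrow>
   ('m \<Rightarrow> 'm \<Rightarrow> 'm set) \<Rightarrow> ('r \<Rightarrow> 'm \<Rightarrow> 'm set) \<Rightarrow>
   ('m set \<Rightarrow> real \<times> real) \<Rightarrow> ('m set \<Rightarrow> real \<times> real) \<Rightarrow> bool" where
  "ivi_fuzzy_fund_submodule s t addR mulR addM smul MQ NQ \<longleftrightarrow>
     (let Mq = fund_module addR mulR addM smul; Rq = fund_ring addR mulR;
          z = omega addR mulR addM smul in
     ivifs Mq MQ NQ \<and>
     MQ z = (1, 1) \<and> NQ z = (0, 0) \<and>
     (\<forall>X\<in>Mq. \<forall>Y\<in>Mq.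
        ivle (ivnorm t (MQ X) (MQ Y)) (MQ (fsub addR mulR addM smul X Y)) \<and>
        ivle (NQ (fsub addR mulR addM smul X Y)) (ivnorm s (NQ X) (NQ Y))) \<and>
     (\<forall>X\<in>Mq. \<forall>P\<in>Rq.
        ivle (MQ X) (MQ (fsmul addR mulR addM smul P X)) \<and>
        ivle (NQ (fsmul addR mulR addM smul P X)) (NQ X)))"

end

theory Submission
  imports Defs
begin
locale hvm =
  fixes addR mulR :: "'r \<Rightarrow> 'r \<Rightarrow> 'r set" and addM :: "'m \<Rightarrow> 'm \<Rightarrow> 'm set"
    and smul :: "'r \<Rightarrow> 'm \<Rightarrow> 'm set"
  assumes hvm: "hv_module addR mulR addM smul"
begin

abbreviation "E \<equiv> eps_star addR mulR addM smul"
abbreviation "cls \<equiv> eps_class addR mulR addM smul"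
abbreviation "FM \<equiv> fund_module addR mulR addM smul"
abbreviation "fa \<equiv> fadd addR mulR addM smul"
abbreviation "om \<equiv> omega addR mulR addM smul"
abbreviation "neg \<equiv> fneg addR mulR addM smul"
abbreviation "sub \<equiv> fsub addR mulR addM smul"
abbreviation "gc \<equiv> gamma_class addR mulR"
abbreviation "fsm \<equiv> fsmul addR mulR addM smul"

lemma addM_ne: "addM x y \<noteq> {}"
  using hvm unfolding hv_module_def hv_group_def hv_semigroup_def hyperop_def by blast

lemma smul_ne: "smul r x \<noteq> {}"
  using hvm unfolding hv_module_def hyperop_def by blast

lemma E_refl: "E x x" unfolding eps_star_def by simp

lemma E_trans: "E x y \<Longrightarrow> E y z \<Longrightarrow> E x z"
  unfolding eps_star_def by (rule rtranclp_trans)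

lemma E_sym: "E x y \<Longrightarrow> E y x"
proof -
  have "symp (eps_rel addR mulR addM smul)" unfolding eps_rel_def symp_def by blast
  then show "E x y \<Longrightarrow> E y x" unfolding eps_star_def by (meson sympD symp_rtranclp)
qed

lemma E_rel: "u \<in> mexp addR mulR addM smul \<Longrightarrow> x \<in> u \<Longrightarrow> y \<in> u \<Longrightarrow> E x y"
  unfolding eps_star_def by (rule r_into_rtranclp) (auto simp: eps_rel_def)

lemma in_cls: "y \<in> cls x \<longleftrightarrow> E x y" unfolding eps_class_def by simp

lemma self_cls: "x \<in> cls x" using E_refl in_cls by blast

lemma cls_eq: "cls x = cls y \<longleftrightarrow> E x y"
  unfolding eps_class_def using E_refl E_sym E_trans by blast

lemma FM_iff: "X \<in> FM \<longleftrightarrow> (\<exists>x. X = cls x)" unfolding fund_module_def by auto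

lemma setop_single: "setop f {x} {y} = f x y" unfolding setop_def by simp

lemma add_same: "c \<in> addM x y \<Longrightarrow> c' \<in> addM x y \<Longrightarrow> E c c'"
  by (metis E_rel mexp.mexp_add mexp.mexp_single setop_single)

lemma add_cong1: "(eps_rel addR mulR addM smul)\<^sup>*\<^sup>* x x' \<Longrightarrow> c \<in> addM x y \<Longrightarrow> c' \<in> addM x' y \<Longrightarrow> E c c'"
proof (induction arbitrary: c' rule: rtranclp_induct)
  case base then show ?case using add_same by blast
next
  case (step x1 x2)
  obtain c1 where c1: "c1 \<in> addM x1 y" using addM_ne by blast
  obtain u where u: "u \<in> mexp addR mulR addM smul" "x1 \<in> u" "x2 \<in> u"
    using step(2) unfolding eps_rel_def by blast
  have "setop addM u {y} \<in> mexp addR mulR addM smul" using u(1) by (simp add: mexp.mexp_add mexp.mexp_single)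
  moreover have "c1 \<in> setop addM u {y}" "c' \<in> setop addM u {y}"
    using c1 step u unfolding setop_def by auto
  ultimately have "E c1 c'" using E_rel by blast
  then show ?case using step(3)[OF step(4) c1] E_trans by blast
qed

lemma add_cong2: "(eps_rel addR mulR addM smul)\<^sup>*\<^sup>* y y' \<Longrightarrow> c \<in> addM x y \<Longrightarrow> c' \<in> addM x y' \<Longrightarrow> E c c'"
proof (induction arbitrary: c' rule: rtranclp_induct)
  case base then show ?case using add_same by blast
next
  case (step x1 x2)
  obtain c1 where c1: "c1 \<in> addM x x1" using addM_ne by blast
  obtain u where u: "u \<in> mexp addR mulR addM smul" "x1 \<in> u" "x2 \<in> u"
    using step(2) unfolding eps_rel_def by blast
  have "setop addM {x} u \<in> mexp addR mulR addM smul" using u(1) by (simp add: mexp.mexp_add mexp.mexp_single)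
  moreover have "c1 \<in> setop addM {x} u" "c' \<in> setop addM {x} u"
    using c1 step u unfolding setop_def by auto
  ultimately have "E c1 c'" using E_rel by blast
  then show ?case using step(3)[OF step(4) c1] E_trans by blast
qed

lemma add_cong: "E x x' \<Longrightarrow> E y y' \<Longrightarrow> c \<in> addM x y \<Longrightarrow> c' \<in> addM x' y' \<Longrightarrow> E c c'"
proof -
  assume a: "E x x'" "E y y'" "c \<in> addM x y" "c' \<in> addM x' y'"
  obtain c1 where c1: "c1 \<in> addM x' y" using addM_ne by blast
  show "E c c'" using add_cong1[OF a(1)[unfolded eps_star_def] a(3) c1] add_cong2[OF a(2)[unfolded eps_star_def] c1 a(4)] E_trans by blast
qed

lemma fa_cls: "c \<in> addM x y \<Longrightarrow> fa (cls x) (cls y) = cls c"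
proof -
  assume c: "c \<in> addM x y"
  have ex: "\<exists>d. d \<in> setop addM (cls x) (cls y)"
    using c self_cls unfolding setop_def by blast
  define d where "d = (SOME d. d \<in> setop addM (cls x) (cls y))"
  have "d \<in> setop addM (cls x) (cls y)" unfolding d_def using ex by (rule someI_ex)
  then obtain x' y' where "E x x'" "E y y'" "d \<in> addM x' y'"
    by (auto simp: setop_def in_cls)
  then have "E c d" using add_cong c by blast
  then show ?thesis unfolding fadd_def d_def[symmetric] using cls_eq E_sym by blast
qed

lemma fa_ex: "\<exists>c. fa (cls x) (cls y) = cls c \<and> c \<in> addM x y"
  using addM_ne fa_cls by blast

lemma fa_comm: "fa (cls x) (cls y) = fa (cls y) (cls x)"
proof -
  obtain c where "c \<in> addM x y" "c \<in> addM y x"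
    using hvm unfolding hv_module_def weak_comm_def by blast
  then show ?thesis using fa_cls by metis
qed

lemma fa_assoc: "fa (fa (cls x) (cls y)) (cls z) = fa (cls x) (fa (cls y) (cls z))"
proof -
  obtain e where "e \<in> setop addM {x} (addM y z)" "e \<in> setop addM (addM x y) {z}"
    using hvm unfolding hv_module_def hv_group_def hv_semigroup_def by blast
  then obtain c d where c: "c \<in> addM y z" "e \<in> addM x c" and d: "d \<in> addM x y" "e \<in> addM d z"
    unfolding setop_def by blast
  show ?thesis using fa_cls[OF c(1)] fa_cls[OF c(2)] fa_cls[OF d(1)] fa_cls[OF d(2)] by simp
qed

lemma solve: "\<exists>v. fa (cls x) (cls v) = cls y"
proof -
  have "y \<in> setop addM {x} UNIV"
    using hvm unfolding hv_module_def hv_group_def by blast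
  then obtain v where "y \<in> addM x v" unfolding setop_def by blast
  then show ?thesis using fa_cls by blast
qed

definition "u0 = (SOME u. fa (cls undefined) (cls u) = cls undefined)"

lemma u0_id: "fa (cls y) (cls u0) = cls y"
proof -
  have "fa (cls undefined) (cls u0) = cls undefined"
    unfolding u0_def using solve by (rule someI_ex)
  moreover obtain v where "fa (cls undefined) (cls v) = cls y" using solve by blast
  ultimately show ?thesis by (metis fa_assoc fa_comm)
qed

lemma om_eq: "om = cls u0"
proof -
  have "\<forall>X\<in>FM. fa (cls u0) X = X \<and> fa X (cls u0) = X"
    using u0_id fa_comm FM_iff by metis
  moreover have "W = cls u0" if "W \<in> FM" "\<forall>X\<in>FM. fa W X = X \<and> fa X W = X" for W
    using that by (metis FM_iff u0_id)
  ultimately show ?thesis unfolding omega_def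
    by (intro the_equality) (auto simp: FM_iff)
qed

lemma om_FM: "om \<in> FM" using om_eq FM_iff by blast

lemma fa_om: "fa (cls y) om = cls y" "fa om (cls y) = cls y"
  using u0_id fa_comm om_eq by metis+

lemma inv_ex: "\<exists>v. fa (cls x) (cls v) = om" using solve om_eq by blast

lemma cancel: "fa (cls x) (cls y) = fa (cls x) (cls z) \<Longrightarrow> cls y = cls z"
proof -
  assume a: "fa (cls x) (cls y) = fa (cls x) (cls z)"
  obtain v where v: "fa (cls x) (cls v) = om" using inv_ex by blast
  obtain c where c: "fa (cls x) (cls y) = cls c" using fa_ex by blast
  have "cls y = fa om (cls y)" using fa_om by simp
  also have "\<dots> = fa (cls v) (cls c)" using v c by (metis fa_assoc fa_comm)
  also have "\<dots> = fa om (cls z)" using v c a by (metis fa_assoc fa_comm)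
  finally show ?thesis using fa_om by simp
qed

lemma neg: "neg (cls y) \<in> FM \<and> fa (cls y) (neg (cls y)) = om"
proof -
  obtain v where v: "fa (cls y) (cls v) = om" using inv_ex by blast
  have "neg (cls y) = cls v" unfolding fneg_def
  proof (rule the_equality)
    show "cls v \<in> FM \<and> fa (cls y) (cls v) = om" using v FM_iff by blast
    fix W assume "W \<in> FM \<and> fa (cls y) W = om"
    then show "W = cls v" using v cancel FM_iff by metis
  qed
  then show ?thesis using v FM_iff by auto
qed

lemma sub_cls: "x \<in> addM y z \<Longrightarrow> sub (cls x) (cls y) = cls z"
proof -
  assume a: "x \<in> addM y z"
  obtain n where n: "neg (cls y) = cls n" using neg FM_iff by metis
  have "sub (cls x) (cls y) = fa (fa (cls y) (cls z)) (cls n)"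
    unfolding fsub_def using fa_cls[OF a] n by simp
  also have "\<dots> = fa (cls z) (fa (cls y) (cls n))" by (metis fa_assoc fa_comm)
  also have "\<dots> = cls z" using neg n fa_om by metis
  finally show ?thesis .
qed

lemma sub_om: "sub (cls x) om = cls x"
proof -
  obtain n where n: "neg (cls u0) = cls n" using neg[of u0] FM_iff by metis
  have "neg om = om" using neg[of u0] om_eq fa_om(2)[of n] n by simp
  then show ?thesis unfolding fsub_def using fa_om by simp
qed

lemma zero_cls: "y \<in> addM y z \<Longrightarrow> cls z = om"
  by (metis fa_cls fa_om(1) cancel om_eq)

lemma smul_cong1: "(gamma_rel addR mulR)\<^sup>*\<^sup>* r r' \<Longrightarrow> d \<in> smul r x \<Longrightarrow> d' \<in> smul r' x \<Longrightarrow> E d d'"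
proof (induction arbitrary: d' rule: rtranclp_induct)
  case base
  then show ?case by (metis E_rel mexp.mexp_smul mexp.mexp_single rexp.rexp_single setop_single)
next
  case (step x1 x2)
  obtain c1 where c1: "c1 \<in> smul x1 x" using smul_ne by blast
  obtain u where u: "u \<in> rexp addR mulR" "x1 \<in> u" "x2 \<in> u"
    using step(2) unfolding gamma_rel_def by blast
  have "setop smul u {x} \<in> mexp addR mulR addM smul" using u(1) by (simp add: mexp.mexp_smul mexp.mexp_single)
  moreover have "c1 \<in> setop smul u {x}" "d' \<in> setop smul u {x}"
    using c1 step u unfolding setop_def by auto
  ultimately have "E c1 d'" using E_rel by blast
  then show ?case using step(3)[OF step(4) c1] E_trans by blast
qed

lemma smul_cong2: "(eps_rel addR mulR addM smul)\<^sup>*\<^sup>* x x' \<Longrightarrow> d \<in> smul r x \<Longrightarrow> d' \<in> smul r x' \<Longrightarrow> E d d'"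
proof (induction arbitrary: d' rule: rtranclp_induct)
  case base
  then show ?case by (metis E_rel mexp.mexp_smul mexp.mexp_single rexp.rexp_single setop_single)
next
  case (step x1 x2)
  obtain c1 where c1: "c1 \<in> smul r x1" using smul_ne by blast
  obtain u where u: "u \<in> mexp addR mulR addM smul" "x1 \<in> u" "x2 \<in> u"
    using step(2) unfolding eps_rel_def by blast
  have "setop smul {r} u \<in> mexp addR mulR addM smul" using u(1) by (simp add: mexp.mexp_smul rexp.rexp_single)
  moreover have "c1 \<in> setop smul {r} u" "d' \<in> setop smul {r} u"
    using c1 step u unfolding setop_def by auto
  ultimately have "E c1 d'" using E_rel by blast
  then show ?case using step(3)[OF step(4) c1] E_trans by blast
qed

lemma fsm_cls: "d \<in> smul r x \<Longrightarrow> fsm (gc r) (cls x) = cls d"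
proof -
  assume d: "d \<in> smul r x"
  have rr: "r \<in> gc r" unfolding gamma_class_def gamma_star_def by simp
  have ex: "\<exists>d. d \<in> setop smul (gc r) (cls x)"
    using d self_cls rr unfolding setop_def by blast
  define d' where "d' = (SOME d. d \<in> setop smul (gc r) (cls x))"
  have "d' \<in> setop smul (gc r) (cls x)" unfolding d'_def using ex by (rule someI_ex)
  then obtain r' x' where "gamma_star addR mulR r r'" "E x x'" "d' \<in> smul r' x'"
    by (auto simp: setop_def in_cls gamma_class_def)
  moreover obtain d1 where d1: "d1 \<in> smul r' x" using smul_ne by blast
  ultimately have "E d d'" using smul_cong1[OF _ d d1] smul_cong2[OF _ d1] E_trans
    unfolding eps_star_def gamma_star_def by blast
  then show ?thesis unfolding fsmul_def d'_def[symmetric] using cls_eq E_sym by blast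
qed

lemma fsm_om: "fsm (gc r) om = om"
proof -
  obtain c where c: "c \<in> addM u0 u0" using addM_ne by blast
  have cc: "cls c = om" using fa_cls[OF c] fa_om om_eq by metis
  obtain e where "e \<in> setop smul {r} (addM u0 u0)" "e \<in> setop addM (smul r u0) (smul r u0)"
    using hvm unfolding hv_module_def by blast
  then obtain c' d1 d2 where c': "c' \<in> addM u0 u0" "e \<in> smul r c'"
     and d: "d1 \<in> smul r u0" "d2 \<in> smul r u0" "e \<in> addM d1 d2"
    unfolding setop_def by blast
  have "cls c' = om" using add_same[OF c c'(1)] cc cls_eq by metis
  then have D: "fsm (gc r) om = cls e" using fsm_cls[OF c'(2)] by simp
  have "cls d2 = cls d1" using smul_cong2[OF E_refl[unfolded eps_star_def] d(2) d(1)] cls_eq by blast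
  moreover have "fsm (gc r) om = cls d1" using fsm_cls[OF d(1)] om_eq by simp
  ultimately have "fa (cls d1) (cls d1) = fa (cls d1) om" using fa_cls[OF d(3)] D fa_om by metis
  then show ?thesis using cancel om_eq \<open>fsm (gc r) om = cls d1\<close> by metis
qed

end

lemma tnorm_min: assumes "idem_tnorm t" "x \<in> {0..1}" "y \<in> {0..1}" shows "t x y = min x y"
proof -
  have nb: "norm_basic t" and one: "\<forall>x\<in>{0..1}. t x 1 = x" using assms(1) unfolding idem_tnorm_def by auto
  have mono: "\<And>x y x' y'. x\<in>{0..1} \<Longrightarrow> y\<in>{0..1} \<Longrightarrow> x'\<in>{0..1} \<Longrightarrow> y'\<in>{0..1} \<Longrightarrow> x \<le> x' \<Longrightarrow> y \<le> y' \<Longrightarrow> t x y \<le> t x' y'"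
    using nb unfolding norm_basic_def by blast
  have idem: "\<And>x. x\<in>{0..1} \<Longrightarrow> t x x = x" using nb unfolding norm_basic_def by blast
  have com: "t x y = t y x" using nb assms unfolding norm_basic_def by blast
  have m: "min x y \<in> {0..1}" using assms by auto
  have "t x y \<le> t x 1" using mono[of x y x 1] assms by auto
  then have a: "t x y \<le> x" using one assms by simp
  have "t y x \<le> t y 1" using mono[of y x y 1] assms by auto
  then have b: "t x y \<le> y" using one assms com by simp
  have "t (min x y) (min x y) \<le> t x y" using mono[of "min x y" "min x y" x y] assms m by auto
  then have c: "min x y \<le> t x y" using idem[OF m] by simp
  show ?thesis using a b c by (auto simp: min_def split: if_splits)
qed

lemma snorm_max: assumes "idem_snorm t" "x \<in> {0..1}" "y \<in> {0..1}" shows "t x y = max x y"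
proof -
  have nb: "norm_basic t" and zero: "\<forall>x\<in>{0..1}. t x 0 = x" using assms(1) unfolding idem_snorm_def by auto
  have mono: "\<And>x y x' y'. x\<in>{0..1} \<Longrightarrow> y\<in>{0..1} \<Longrightarrow> x'\<in>{0..1} \<Longrightarrow> y'\<in>{0..1} \<Longrightarrow> x \<le> x' \<Longrightarrow> y \<le> y' \<Longrightarrow> t x y \<le> t x' y'"
    using nb unfolding norm_basic_def by blast
  have idem: "\<And>x. x\<in>{0..1} \<Longrightarrow> t x x = x" using nb unfolding norm_basic_def by blast
  have com: "t x y = t y x" using nb assms unfolding norm_basic_def by blast
  have m: "max x y \<in> {0..1}" using assms by auto
  have "t x 0 \<le> t x y" using mono[of x 0 x y] assms by auto
  then have a: "x \<le> t x y" using zero assms by simp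
  have "t y 0 \<le> t y x" using mono[of y 0 y x] assms by auto
  then have b: "y \<le> t x y" using zero assms com by simp
  have "t x y \<le> t (max x y) (max x y)" using mono[of x y "max x y" "max x y"] assms m by auto
  then have c: "t x y \<le> max x y" using idem[OF m] by simp
  show ?thesis using a b c by (auto simp: max_def split: if_splits)
qed

lemma sup_le1: "X \<noteq> {} \<Longrightarrow> \<forall>x. f x \<le> (1::real) \<Longrightarrow> Sup (f ` X) \<le> 1"
  by (intro cSUP_least) auto

lemma sup_ge: "x \<in> X \<Longrightarrow> \<forall>x. f x \<le> (1::real) \<Longrightarrow> f x \<le> Sup (f ` X)"
  by (intro cSUP_upper bdd_aboveI2[where M=1]) auto

lemma inf_le: "x \<in> X \<Longrightarrow> \<forall>x. 0 \<le> f x \<Longrightarrow> Inf (f ` X) \<le> (f x::real)"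
  by (intro cINF_lower bdd_belowI2[where m=0]) auto

lemma inf_ge0: "X \<noteq> {} \<Longrightarrow> \<forall>x. 0 \<le> (f x::real) \<Longrightarrow> 0 \<le> Inf (f ` X)"
  by (intro cINF_greatest) auto

lemma sup_mono1: assumes "X \<noteq> {}" "\<forall>x. f x \<le> (1::real)" "\<And>x. x \<in> X \<Longrightarrow> \<exists>z\<in>Z. f x \<le> f z"
  shows "Sup (f ` X) \<le> Sup (f ` Z)"
proof (rule cSUP_least[OF assms(1)])
  fix x assume "x \<in> X" then obtain z where "z \<in> Z" "f x \<le> f z" using assms(3) by blast
  then show "f x \<le> Sup (f ` Z)" using sup_ge[of z Z f, OF _ assms(2)] by linarith
qed

lemma inf_mono1: assumes "X \<noteq> {}" "\<forall>x. 0 \<le> (f x::real)" "\<And>x. x \<in> X \<Longrightarrow> \<exists>z\<in>Z. f z \<le> f x"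
  shows "Inf (f ` Z) \<le> Inf (f ` X)"
proof (rule cINF_greatest[OF assms(1)])
  fix x assume "x \<in> X" then obtain z where "z \<in> Z" "f z \<le> f x" using assms(3) by blast
  then show "Inf (f ` Z) \<le> f x" using inf_le[of z Z f, OF _ assms(2)] by linarith
qed

lemma sup_min2: assumes "X \<noteq> {}" "Y \<noteq> {}" "\<forall>x. f x \<le> (1::real)"
  "\<And>x y. x \<in> X \<Longrightarrow> y \<in> Y \<Longrightarrow> \<exists>z\<in>Z. min (f x) (f y) \<le> f z"
  shows "min (Sup (f ` X)) (Sup (f ` Y)) \<le> Sup (f ` Z)"
proof (rule ccontr)
  assume "\<not> ?thesis"
  then have "Sup (f ` Z) < min (Sup (f ` X)) (Sup (f ` Y))" by (simp only: not_le)
  then have a: "Sup (f ` Z) < Sup (f ` X)" "Sup (f ` Z) < Sup (f ` Y)" by simp_all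
  have "\<exists>v\<in>f ` X. Sup (f ` Z) < v" using less_cSupD[of "f ` X", OF _ a(1)] assms(1) by simp
  then obtain x where x: "x \<in> X" "Sup (f ` Z) < f x" by blast
  have "\<exists>v\<in>f ` Y. Sup (f ` Z) < v" using less_cSupD[of "f ` Y", OF _ a(2)] assms(2) by simp
  then obtain y where y: "y \<in> Y" "Sup (f ` Z) < f y" by blast
  obtain z where "z \<in> Z" "min (f x) (f y) \<le> f z" using assms(4) x y by blast
  then show False using sup_ge[of z Z f, OF _ assms(3)] x y by linarith
qed

lemma inf_max2: assumes "X \<noteq> {}" "Y \<noteq> {}" "\<forall>x. 0 \<le> (f x::real)"
  "\<And>x y. x \<in> X \<Longrightarrow> y \<in> Y \<Longrightarrow> \<exists>z\<in>Z. f z \<le> max (f x) (f y)"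
  shows "Inf (f ` Z) \<le> max (Inf (f ` X)) (Inf (f ` Y))"
proof (rule ccontr)
  assume "\<not> ?thesis"
  then have "max (Inf (f ` X)) (Inf (f ` Y)) < Inf (f ` Z)" by (simp only: not_le)
  then have a: "Inf (f ` X) < Inf (f ` Z)" "Inf (f ` Y) < Inf (f ` Z)" by simp_all
  have "\<exists>v\<in>f ` X. v < Inf (f ` Z)" using cInf_lessD[of "f ` X", OF _ a(1)] assms(1) by simp
  then obtain x where x: "x \<in> X" "f x < Inf (f ` Z)" by blast
  have "\<exists>v\<in>f ` Y. v < Inf (f ` Z)" using cInf_lessD[of "f ` Y", OF _ a(2)] assms(2) by simp
  then obtain y where y: "y \<in> Y" "f y < Inf (f ` Z)" by blast
  obtain z where "z \<in> Z" "f z \<le> max (f x) (f y)" using assms(4) x y by blast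
  then show False using inf_le[of z Z f, OF _ assms(3)] x y by linarith
qed

context hvm begin

definition QS :: "('m \<Rightarrow> real) \<Rightarrow> 'm set \<Rightarrow> real" where "QS f X = (if X = om then 1 else Sup (f ` X))"
definition QI :: "('m \<Rightarrow> real) \<Rightarrow> 'm set \<Rightarrow> real" where "QI f X = (if X = om then 0 else Inf (f ` X))"

lemma cls_ne: "cls x \<noteq> {}" using self_cls by blast

lemma FM_ne: "X \<in> FM \<Longrightarrow> X \<noteq> {}" using FM_iff cls_ne by blast

lemma FM_rep: "X \<in> FM \<Longrightarrow> x \<in> X \<Longrightarrow> X = cls x"
proof -
  assume "X \<in> FM" "x \<in> X"
  then obtain y where "X = cls y" "x \<in> cls y" using FM_iff by blast
  then show "X = cls x" using cls_eq in_cls by simp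
qed

lemma QS_le1: "X \<in> FM \<Longrightarrow> \<forall>x. f x \<le> 1 \<Longrightarrow> QS f X \<le> 1"
  unfolding QS_def using sup_le1[of X f] FM_ne[of X] by simp

lemma QI_ge0: "X \<in> FM \<Longrightarrow> \<forall>x. 0 \<le> f x \<Longrightarrow> 0 \<le> QI f X"
  unfolding QI_def using inf_ge0[of X f] FM_ne[of X] by simp

lemma QS_sub: assumes b: "\<forall>x. f x \<le> 1"
  and h: "\<And>x a. \<exists>y. x \<in> addM a y \<and> min (f x) (f a) \<le> f y"
  and X: "X \<in> FM" and Y: "Y \<in> FM"
  shows "min (QS f X) (QS f Y) \<le> QS f (sub X Y)"
proof (cases "sub X Y = om")
  case True then show ?thesis using QS_le1[OF X b] unfolding QS_def by auto
next
  case F: False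
  obtain x0 where x0: "X = cls x0" using X unfolding FM_iff by blast
  obtain y0 where y0: "Y = cls y0" using Y unfolding FM_iff by blast
  show ?thesis
  proof (cases "Y = om")
    case True
    then have "sub X Y = X" using sub_om[of x0] x0 by simp
    then show ?thesis by simp
  next
    case Yn: False
    show ?thesis
    proof (cases "X = om")
      case Xo: True
      have "Sup (f ` Y) \<le> Sup (f ` sub X Y)"
      proof (rule sup_mono1[OF FM_ne[OF Y] b])
        fix y assume y: "y \<in> Y"
        obtain y' where y': "y \<in> addM y y'" "min (f y) (f y) \<le> f y'" using h by blast
        have "cls y' = om" using zero_cls[OF y'(1)] .
        obtain z where z: "y' \<in> addM y z" "min (f y') (f y) \<le> f z" using h by blast
        have "sub X Y = cls z" using sub_cls[OF z(1)] Xo \<open>cls y' = om\<close> FM_rep[OF Y y] by simp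
        moreover have "f y \<le> f z" using y'(2) z(2) by (auto simp: min_def split: if_splits)
        ultimately show "\<exists>z\<in>sub X Y. f y \<le> f z" using self_cls by blast
      qed
      then show ?thesis using Xo Yn F unfolding QS_def by auto
    next
      case Xn: False
      have "min (Sup (f ` X)) (Sup (f ` Y)) \<le> Sup (f ` sub X Y)"
      proof (rule sup_min2[OF FM_ne[OF X] FM_ne[OF Y] b])
        fix x y assume x: "x \<in> X" and y: "y \<in> Y"
        obtain z where z: "x \<in> addM y z" "min (f x) (f y) \<le> f z" using h by blast
        have "sub X Y = cls z" using sub_cls[OF z(1)] FM_rep[OF X x] FM_rep[OF Y y] by simp
        then show "\<exists>z\<in>sub X Y. min (f x) (f y) \<le> f z" using self_cls z by blast
      qed
      then show ?thesis using Xn Yn F unfolding QS_def by auto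
    qed
  qed
qed

lemma QI_sub: assumes b: "\<forall>x. 0 \<le> f x"
  and h: "\<And>x a. \<exists>y. x \<in> addM a y \<and> f y \<le> max (f x) (f a)"
  and X: "X \<in> FM" and Y: "Y \<in> FM"
  shows "QI f (sub X Y) \<le> max (QI f X) (QI f Y)"
proof (cases "sub X Y = om")
  case True then show ?thesis using QI_ge0[OF X b] unfolding QI_def by auto
next
  case F: False
  obtain x0 where x0: "X = cls x0" using X unfolding FM_iff by blast
  obtain y0 where y0: "Y = cls y0" using Y unfolding FM_iff by blast
  show ?thesis
  proof (cases "Y = om")
    case True
    then have "sub X Y = X" using sub_om[of x0] x0 by simp
    then show ?thesis by simp
  next
    case Yn: False
    show ?thesis
    proof (cases "X = om")
      case Xo: True
      have "Inf (f ` sub X Y) \<le> Inf (f ` Y)"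
      proof (rule inf_mono1[OF FM_ne[OF Y] b])
        fix y assume y: "y \<in> Y"
        obtain y' where y': "y \<in> addM y y'" "f y' \<le> max (f y) (f y)" using h by blast
        have "cls y' = om" using zero_cls[OF y'(1)] .
        obtain z where z: "y' \<in> addM y z" "f z \<le> max (f y') (f y)" using h by blast
        have "sub X Y = cls z" using sub_cls[OF z(1)] Xo \<open>cls y' = om\<close> FM_rep[OF Y y] by simp
        moreover have "f z \<le> f y" using y'(2) z(2) by (auto simp: max_def split: if_splits)
        ultimately show "\<exists>z\<in>sub X Y. f z \<le> f y" using self_cls by blast
      qed
      then show ?thesis using Xo Yn F unfolding QI_def by auto
    next
      case Xn: False
      have "Inf (f ` sub X Y) \<le> max (Inf (f ` X)) (Inf (f ` Y))"
      proof (rule inf_max2[OF FM_ne[OF X] FM_ne[OF Y] b])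
        fix x y assume x: "x \<in> X" and y: "y \<in> Y"
        obtain z where z: "x \<in> addM y z" "f z \<le> max (f x) (f y)" using h by blast
        have "sub X Y = cls z" using sub_cls[OF z(1)] FM_rep[OF X x] FM_rep[OF Y y] by simp
        then show "\<exists>z\<in>sub X Y. f z \<le> max (f x) (f y)" using self_cls z by blast
      qed
      then show ?thesis using Xn Yn F unfolding QI_def by auto
    qed
  qed
qed

lemma QS_smul: assumes b: "\<forall>x. f x \<le> 1"
  and h: "\<And>x r d. d \<in> smul r x \<Longrightarrow> f x \<le> f d"
  and X: "X \<in> FM" and P: "P \<in> fund_ring addR mulR"
  shows "QS f X \<le> QS f (fsm P X)"
proof -
  obtain r where r: "P = gc r" using P unfolding fund_ring_def by blast
  obtain x0 where x0: "X = cls x0" using X unfolding FM_iff by blast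
  show ?thesis
  proof (cases "fsm P X = om")
    case True then show ?thesis using QS_le1[OF X b] unfolding QS_def by auto
  next
    case F: False
    then have Xn: "X \<noteq> om" using fsm_om r by auto
    have "Sup (f ` X) \<le> Sup (f ` fsm P X)"
    proof (rule sup_mono1[OF FM_ne[OF X] b])
      fix x assume x: "x \<in> X"
      obtain d where d: "d \<in> smul r x" using smul_ne by blast
      have "fsm P X = cls d" using fsm_cls[OF d] r FM_rep[OF X x] by simp
      then show "\<exists>z\<in>fsm P X. f x \<le> f z" using self_cls h[OF d] by blast
    qed
    then show ?thesis using F Xn unfolding QS_def by auto
  qed
qed

lemma QI_smul: assumes b: "\<forall>x. 0 \<le> f x"
  and h: "\<And>x r d. d \<in> smul r x \<Longrightarrow> f d \<le> f x"
  and X: "X \<in> FM" and P: "P \<in> fund_ring addR mulR"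
  shows "QI f (fsm P X) \<le> QI f X"
proof -
  obtain r where r: "P = gc r" using P unfolding fund_ring_def by blast
  obtain x0 where x0: "X = cls x0" using X unfolding FM_iff by blast
  show ?thesis
  proof (cases "fsm P X = om")
    case True then show ?thesis using QI_ge0[OF X b] unfolding QI_def by auto
  next
    case F: False
    then have Xn: "X \<noteq> om" using fsm_om r by auto
    have "Inf (f ` fsm P X) \<le> Inf (f ` X)"
    proof (rule inf_mono1[OF FM_ne[OF X] b])
      fix x assume x: "x \<in> X"
      obtain d where d: "d \<in> smul r x" using smul_ne by blast
      have "fsm P X = cls d" using fsm_cls[OF d] r FM_rep[OF X x] by simp
      then show "\<exists>z\<in>fsm P X. f z \<le> f x" using self_cls h[OF d] by blast
    qed
    then show ?thesis using F Xn unfolding QI_def by auto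
  qed
qed

end

context hvm begin

lemma QS_ge0: "X \<in> FM \<Longrightarrow> \<forall>x. 0 \<le> f x \<Longrightarrow> \<forall>x. f x \<le> 1 \<Longrightarrow> 0 \<le> QS f X"
proof -
  assume X: "X \<in> FM" and a: "\<forall>x. 0 \<le> f x" "\<forall>x. f x \<le> 1"
  obtain x where x: "x \<in> X" using FM_ne[OF X] by blast
  show ?thesis unfolding QS_def using sup_ge[OF x a(2)] a(1) by (simp, meson order_trans)
qed

lemma QS_mono_fun: "X \<in> FM \<Longrightarrow> \<forall>x. f x \<le> g x \<Longrightarrow> \<forall>x. g x \<le> 1 \<Longrightarrow> QS f X \<le> QS g X"
proof -
  assume X: "X \<in> FM" and a: "\<forall>x. f x \<le> g x" "\<forall>x. g x \<le> 1"
  have "Sup (f ` X) \<le> Sup (g ` X)"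
  proof (rule cSUP_least[OF FM_ne[OF X]])
    fix x assume "x \<in> X"
    then show "f x \<le> Sup (g ` X)" using sup_ge[of x X g, OF _ a(2)] a(1) by (meson order_trans)
  qed
  then show ?thesis unfolding QS_def by simp
qed

lemma QI_le1: "X \<in> FM \<Longrightarrow> \<forall>x. 0 \<le> f x \<Longrightarrow> \<forall>x. f x \<le> 1 \<Longrightarrow> QI f X \<le> 1"
proof -
  assume X: "X \<in> FM" and a: "\<forall>x. 0 \<le> f x" "\<forall>x. f x \<le> 1"
  obtain x where x: "x \<in> X" using FM_ne[OF X] by blast
  show ?thesis unfolding QI_def using inf_le[OF x a(1)] a(2) by (simp, meson order_trans)
qed

lemma QI_mono_fun: "X \<in> FM \<Longrightarrow> \<forall>x. f x \<le> g x \<Longrightarrow> \<forall>x. 0 \<le> f x \<Longrightarrow> QI f X \<le> QI g X"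
proof -
  assume X: "X \<in> FM" and a: "\<forall>x. f x \<le> g x" "\<forall>x. 0 \<le> f x"
  have "Inf (f ` X) \<le> Inf (g ` X)"
  proof (rule cINF_greatest[OF FM_ne[OF X]])
    fix x assume "x \<in> X"
    then show "Inf (f ` X) \<le> g x" using inf_le[of x X f, OF _ a(2)] a(1) by (meson order_trans)
  qed
  then show ?thesis unfolding QI_def by simp
qed

lemma QS_QI: "X \<in> FM \<Longrightarrow> \<forall>x. f x + g x \<le> 1 \<Longrightarrow> \<forall>x. 0 \<le> g x \<Longrightarrow> QS f X + QI g X \<le> 1"
proof -
  assume X: "X \<in> FM" and a: "\<forall>x. f x + g x \<le> 1" "\<forall>x. 0 \<le> g x"
  have "Sup (f ` X) \<le> 1 - Inf (g ` X)"
  proof (rule cSUP_least[OF FM_ne[OF X]])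
    fix x assume "x \<in> X"
    then have "Inf (g ` X) \<le> g x" using inf_le[of x X g, OF _ a(2)] by simp
    then show "f x \<le> 1 - Inf (g ` X)" using a(1) by (smt (verit))
  qed
  then show ?thesis unfolding QS_def QI_def by simp
qed

end

theorem theorem3p9:
  fixes addR mulR :: "'r \<Rightarrow> 'r \<Rightarrow> 'r set"
    and addM :: "'m \<Rightarrow> 'm \<Rightarrow> 'm set"
    and smul :: "'r \<Rightarrow> 'm \<Rightarrow> 'm set"
    and t s :: "real \<Rightarrow> real \<Rightarrow> real"
    and MA NA :: "'m \<Rightarrow> real \<times> real"
  assumes "hv_module addR mulR addM smul"
    and "idem_tnorm t"
    and "idem_snorm s"
    and "ivi_fuzzy_hv_submodule s t addM smul MA NA"
  shows "ivi_fuzzy_fund_submodule s t addR mulR addM smul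
           (quot_M addR mulR addM smul MA) (quot_N addR mulR addM smul NA)"
proof -
  interpret hvm addR mulR addM smul using assms(1) by unfold_locales
  define f1 where "f1 = (\<lambda>x. fst (MA x))"
  define f2 where "f2 = (\<lambda>x. snd (MA x))"
  define g1 where "g1 = (\<lambda>x. fst (NA x))"
  define g2 where "g2 = (\<lambda>x. snd (NA x))"
  have iv: "\<forall>x. interval01 (MA x) \<and> interval01 (NA x) \<and> snd (MA x) + snd (NA x) \<le> 1"
    and h2: "\<forall>x a. \<exists>y. x \<in> addM a y \<and> ivle (ivnorm t (MA x) (MA a)) (MA y) \<and>
            ivle (NA y) (ivnorm s (NA x) (NA a))"
    and h4: "\<forall>x r. ivle (MA x) (ivInf (MA ` smul r x)) \<and> ivle (ivSup (NA ` smul r x)) (NA x)"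
    using assms(4) unfolding ivi_fuzzy_hv_submodule_def ivifs_def by blast+
  have bd: "\<forall>x. 0 \<le> f1 x" "\<forall>x. f1 x \<le> f2 x" "\<forall>x. f2 x \<le> 1"
    "\<forall>x. 0 \<le> g1 x" "\<forall>x. g1 x \<le> g2 x" "\<forall>x. g2 x \<le> 1" "\<forall>x. f2 x + g2 x \<le> 1"
    using iv unfolding f1_def f2_def g1_def g2_def interval01_def by auto
  have bd2: "\<forall>x. f1 x \<le> 1" "\<forall>x. 0 \<le> f2 x" "\<forall>x. g1 x \<le> 1" "\<forall>x. 0 \<le> g2 x"
    using bd by (meson order_trans)+
  have tm: "t a b = min a b" if "a \<in> {0..1}" "b \<in> {0..1}" for a b
    using tnorm_min[OF assms(2) that] .
  have sm: "s a b = max a b" if "a \<in> {0..1}" "b \<in> {0..1}" for a b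
    using snorm_max[OF assms(3) that] .
  have hf1: "\<exists>y. x \<in> addM a y \<and> min (f1 x) (f1 a) \<le> f1 y" for x a
  proof -
    obtain y where "x \<in> addM a y" "ivle (ivnorm t (MA x) (MA a)) (MA y)" using h2 by blast
    then show ?thesis using tm[of "f1 x" "f1 a"] bd bd2 unfolding ivle_def ivnorm_def f1_def by auto
  qed
  have hf2: "\<exists>y. x \<in> addM a y \<and> min (f2 x) (f2 a) \<le> f2 y" for x a
  proof -
    obtain y where "x \<in> addM a y" "ivle (ivnorm t (MA x) (MA a)) (MA y)" using h2 by blast
    then show ?thesis using tm[of "f2 x" "f2 a"] bd bd2 unfolding ivle_def ivnorm_def f2_def by auto
  qed
  have hg1: "\<exists>y. x \<in> addM a y \<and> g1 y \<le> max (g1 x) (g1 a)" for x a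
  proof -
    obtain y where "x \<in> addM a y" "ivle (NA y) (ivnorm s (NA x) (NA a))" using h2 by blast
    then show ?thesis using sm[of "g1 x" "g1 a"] bd bd2 unfolding ivle_def ivnorm_def g1_def by auto
  qed
  have hg2: "\<exists>y. x \<in> addM a y \<and> g2 y \<le> max (g2 x) (g2 a)" for x a
  proof -
    obtain y where "x \<in> addM a y" "ivle (NA y) (ivnorm s (NA x) (NA a))" using h2 by blast
    then show ?thesis using sm[of "g2 x" "g2 a"] bd bd2 unfolding ivle_def ivnorm_def g2_def by auto
  qed
  have sf1: "f1 x \<le> f1 d" if "d \<in> smul r x" for x r d
  proof -
    have "f1 x \<le> Inf (f1 ` smul r x)" using h4 unfolding ivle_def ivInf_def f1_def
      by (simp add: image_comp comp_def)
    also have "\<dots> \<le> f1 d" using inf_le[OF that bd(1)] .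
    finally show ?thesis .
  qed
  have sf2: "f2 x \<le> f2 d" if "d \<in> smul r x" for x r d
  proof -
    have "f2 x \<le> Inf (f2 ` smul r x)" using h4 unfolding ivle_def ivInf_def f2_def
      by (simp add: image_comp comp_def)
    also have "\<dots> \<le> f2 d" using inf_le[OF that bd2(2)] .
    finally show ?thesis .
  qed
  have sg1: "g1 d \<le> g1 x" if "d \<in> smul r x" for x r d
  proof -
    have "g1 d \<le> Sup (g1 ` smul r x)" using sup_ge[OF that bd2(3)] .
    also have "\<dots> \<le> g1 x" using h4 unfolding ivle_def ivSup_def g1_def
      by (simp add: image_comp comp_def)
    finally show ?thesis .
  qed
  have sg2: "g2 d \<le> g2 x" if "d \<in> smul r x" for x r d
  proof -
    have "g2 d \<le> Sup (g2 ` smul r x)" using sup_ge[OF that bd(6)] .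
    also have "\<dots> \<le> g2 x" using h4 unfolding ivle_def ivSup_def g2_def
      by (simp add: image_comp comp_def)
    finally show ?thesis .
  qed
  have qM: "quot_M addR mulR addM smul MA X = (QS f1 X, QS f2 X)" for X
    unfolding quot_M_def QS_def ivSup_def f1_def f2_def by (simp add: image_comp comp_def)
  have qN: "quot_N addR mulR addM smul NA X = (QI g1 X, QI g2 X)" for X
    unfolding quot_N_def QI_def ivInf_def g1_def g2_def by (simp add: image_comp comp_def)
  have r01: "QS f1 X \<in> {0..1}" "QS f2 X \<in> {0..1}" "QI g1 X \<in> {0..1}" "QI g2 X \<in> {0..1}"
    if "X \<in> FM" for X
    using QS_ge0[OF that bd(1) bd2(1)] QS_le1[OF that bd2(1)]
      QS_ge0[OF that bd2(2) bd(3)] QS_le1[OF that bd(3)]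
      QI_ge0[OF that bd(4)] QI_le1[OF that bd(4) bd2(3)]
      QI_ge0[OF that bd2(4)] QI_le1[OF that bd2(4) bd(6)] by auto
  have p1: "ivifs FM (quot_M addR mulR addM smul MA) (quot_N addR mulR addM smul NA)"
    unfolding ivifs_def qM qN interval01_def
    using r01 QS_mono_fun[OF _ bd(2) bd(3)] QI_mono_fun[OF _ bd(5) bd(4)] QS_QI[OF _ bd(7) bd2(4)]
    by simp
  have p2: "quot_M addR mulR addM smul MA om = (1, 1)" "quot_N addR mulR addM smul NA om = (0, 0)"
    unfolding quot_M_def quot_N_def by simp_all
  have subFM: "sub X Y \<in> FM" if XY: "X \<in> FM" "Y \<in> FM" for X Y
  proof -
    obtain x y where "X = cls x" "Y = cls y" using XY unfolding FM_iff by blast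
    moreover have "x \<in> setop addM {y} UNIV"
      using assms(1) unfolding hv_module_def hv_group_def by blast
    then obtain z where "x \<in> addM y z" unfolding setop_def by blast
    ultimately show ?thesis using sub_cls unfolding FM_iff by blast
  qed
  have smFM: "fsm P X \<in> FM" if XP: "X \<in> FM" "P \<in> fund_ring addR mulR" for X P
  proof -
    obtain x where "X = cls x" using XP unfolding FM_iff by blast
    moreover obtain r where "P = gc r" using XP unfolding fund_ring_def by blast
    moreover obtain d where "d \<in> smul r x" using smul_ne by blast
    ultimately show ?thesis using fsm_cls unfolding FM_iff by blast
  qed
  have p3: "ivle (ivnorm t (quot_M addR mulR addM smul MA X) (quot_M addR mulR addM smul MA Y))
                 (quot_M addR mulR addM smul MA (sub X Y)) \<and>
            ivle (quot_N addR mulR addM smul NA (sub X Y))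
                 (ivnorm s (quot_N addR mulR addM smul NA X) (quot_N addR mulR addM smul NA Y))"
    if X: "X \<in> FM" and Y: "Y \<in> FM" for X Y
    unfolding qM qN ivle_def ivnorm_def fst_conv snd_conv
    using tm[OF r01(1)[OF X] r01(1)[OF Y]] tm[OF r01(2)[OF X] r01(2)[OF Y]]
      sm[OF r01(3)[OF X] r01(3)[OF Y]] sm[OF r01(4)[OF X] r01(4)[OF Y]]
      QS_sub[OF bd2(1) hf1 X Y] QS_sub[OF bd(3) hf2 X Y]
      QI_sub[OF bd(4) hg1 X Y] QI_sub[OF bd2(4) hg2 X Y]
    by simp
  have p4: "ivle (quot_M addR mulR addM smul MA X) (quot_M addR mulR addM smul MA (fsm P X)) \<and>
            ivle (quot_N addR mulR addM smul NA (fsm P X)) (quot_N addR mulR addM smul NA X)"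
    if X: "X \<in> FM" and P: "P \<in> fund_ring addR mulR" for X P
    unfolding qM qN ivle_def fst_conv snd_conv
    using QS_smul[OF bd2(1) sf1 X P] QS_smul[OF bd(3) sf2 X P]
      QI_smul[OF bd(4) sg1 X P] QI_smul[OF bd2(4) sg2 X P]
    by simp
  show ?thesis unfolding ivi_fuzzy_fund_submodule_def Let_def
    using p1 p2 p3 p4 by blast
qed

end
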